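(* Suppose there is $a\in\{0,1\}$, with $\neg a=1-a$, such that both of the following hold: (1) $E\{Z_i\mid A_i=a\}<E\{Z_i\mid A_i=\neg a\}$; (2) $E\{R_i\mid A_i=a\}>E\{R_i\mid A_i=\neg a\}$. Then there exists $\epsilon_o>0$ such that $\hat\gamma(\epsilon_o)=0$ under $\mathscr{A}_{\epsilon_o}$, i.e. $\mathscr{A}_{\epsilon_o}$ is perfectly fair in the demographic parity sense.
   Context: There are $n$ individuals indexed by $\mathcal{N}=\{1,\dots,n\}$. Individual $i$ is described by a random tuple $(X_i,A_i,Y_i)$, with features $X_i\in\mathcal{X}$, protected attribute $A_i\in\{0,1\}$ and qualification state $Y_i\in\{0,1\}$; the tuples are i.i.d. with a common distribution $\mathsf{F}$. A fixed function $r:\mathcal{X}\to\mathcal{R}$ is given, with $\mathcal{R}\subset[0,1]$ finite, and $R_i=r(X_i)$. Both events $\{A_i=0\}$, $\{A_i=1\}$ are assumed to have positive probability. For $\epsilon\ge0$, the exponential mechanism $\mathscr{A}_\epsilon$ selects individual $i$ with probability $Z_{i,\epsilon}=\exp(\epsilon R_i/2)/\sum_{j=1}^n\exp(\epsilon R_j/2)$ given the scores, and the demographic parity gap is $\hat\gamma(\epsilon)=E\{Z_{i,\epsilon}\mid A_i=0\}-E\{Z_{i,\epsilon}\mid A_i=1\}$. With $N_{\max}=|\{i:R_i=\max_jR_j\}|$, let $Z_i=0$ if $R_i\ne\max_jR_j$ and $Z_i=1/N_{\max}$ otherwise. *)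

theory Defs
  imports "HOL-Probability.Probability"
begin

text \<open>A single individual's tuple is (X, A, Y) :: 'x \<times> bool \<times> bool, where the protected
attribute / qualification state value 1 is encoded as True and 0 as False.\<close>

definition joint :: "nat \<Rightarrow> ('x \<times> bool \<times> bool) measure \<Rightarrow> (nat \<Rightarrow> 'x \<times> bool \<times> bool) measure" where
  "joint n F = PiM {..<n} (\<lambda>_. F)"

definition score :: "('x \<Rightarrow> real) \<Rightarrow> (nat \<Rightarrow> 'x \<times> bool \<times> bool) \<Rightarrow> nat \<Rightarrow> real" where
  "score r \<omega> j = r (fst (\<omega> j))"

definition attr :: "(nat \<Rightarrow> 'x \<times> bool \<times> bool) \<Rightarrow> nat \<Rightarrow> bool" where
  "attr \<omega> j = fst (snd (\<omega> j))"

definition cond_exp_ev :: "'a measure \<Rightarrow> ('a \<Rightarrow> bool) \<Rightarrow> ('a \<Rightarrow> real) \<Rightarrow> real" where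
  "cond_exp_ev M P f =
     (\<integral>\<omega>. indicator {\<omega> \<in> space M. P \<omega>} \<omega> * f \<omega> \<partial>M) / measure M {\<omega> \<in> space M. P \<omega>}"

definition Zeps :: "('x \<Rightarrow> real) \<Rightarrow> nat \<Rightarrow> real \<Rightarrow> (nat \<Rightarrow> 'x \<times> bool \<times> bool) \<Rightarrow> nat \<Rightarrow> real" where
  "Zeps r n \<epsilon> \<omega> i =
     exp (\<epsilon> * score r \<omega> i / 2) / (\<Sum>j<n. exp (\<epsilon> * score r \<omega> j / 2))"

definition Zmax :: "('x \<Rightarrow> real) \<Rightarrow> nat \<Rightarrow> (nat \<Rightarrow> 'x \<times> bool \<times> bool) \<Rightarrow> nat \<Rightarrow> real" where
  "Zmax r n \<omega> i =
     (let m = Max (score r \<omega> ` {..<n}) in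
      if score r \<omega> i \<noteq> m then 0
      else 1 / real (card {j \<in> {..<n}. score r \<omega> j = m}))"

definition dp_gap :: "('x \<Rightarrow> real) \<Rightarrow> ('x \<times> bool \<times> bool) measure \<Rightarrow> nat \<Rightarrow> nat \<Rightarrow> real \<Rightarrow> real" where
  "dp_gap r F n i \<epsilon> =
     cond_exp_ev (joint n F) (\<lambda>\<omega>. attr \<omega> i = False) (\<lambda>\<omega>. Zeps r n \<epsilon> \<omega> i)
   - cond_exp_ev (joint n F) (\<lambda>\<omega>. attr \<omega> i = True) (\<lambda>\<omega>. Zeps r n \<epsilon> \<omega> i)"

end

theory Submission
  imports Defs
begin


lemma comp_meas: "j < n \<Longrightarrow> (\<lambda>\<omega>. \<omega> j) \<in> measurable (joint n F) F"
  unfolding joint_def by (rule measurable_component_singleton) simp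

lemma score_meas:
  assumes "(\<lambda>t. r (fst t)) \<in> borel_measurable F" "j < n"
  shows "(\<lambda>\<omega>. score r \<omega> j) \<in> borel_measurable (joint n F)"
  unfolding score_def using measurable_compose[OF comp_meas[OF assms(2)] assms(1)] by simp

lemma attr_meas:
  assumes "(\<lambda>t. fst (snd t)) \<in> measurable F (count_space UNIV)" "j < n"
  shows "(\<lambda>\<omega>. attr \<omega> j) \<in> measurable (joint n F) (count_space UNIV)"
  unfolding attr_def using measurable_compose[OF comp_meas[OF assms(2)] assms(1)] by simp

lemma ev_sets:
  assumes "(\<lambda>t. r (fst t)) \<in> borel_measurable F"
    "(\<lambda>t. fst (snd t)) \<in> measurable F (count_space UNIV)" "i < n"
  shows "{\<omega> \<in> space (joint n F). attr \<omega> i = b \<and> (\<forall>j<n. score r \<omega> j = v j)} \<in> sets (joint n F)"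
proof -
  have [measurable]: "\<And>j. j < n \<Longrightarrow> (\<lambda>\<omega>. score r \<omega> j) \<in> borel_measurable (joint n F)"
    using score_meas assms by blast
  have [measurable]: "(\<lambda>\<omega>. attr \<omega> i) \<in> measurable (joint n F) (count_space UNIV)"
    using attr_meas assms by blast
  have "{\<omega> \<in> space (joint n F). attr \<omega> i = b \<and> (\<forall>j\<in>{..<n}. score r \<omega> j = v j)} \<in> sets (joint n F)"
    by measurable
  then show ?thesis by simp
qed



lemma joint_prob: "prob_space F \<Longrightarrow> prob_space (joint n F)"
  unfolding joint_def by (rule prob_space_PiM)

lemma red:
  assumes Fp: "prob_space F"
    and r_meas: "(\<lambda>t. r (fst t)) \<in> borel_measurable F"
    and A_meas: "(\<lambda>t. fst (snd t)) \<in> measurable F (count_space UNIV)"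
    and r_range: "\<forall>t \<in> space F. r (fst t) \<in> Rset"
    and i_idx: "i < n"
    and Rset_fin: "finite Rset"
  shows "(\<integral>\<omega>. indicator {\<omega>\<in>space (joint n F). attr \<omega> i = b} \<omega> * f (restrict (score r \<omega>) {..<n}) \<partial>joint n F)
     = (\<Sum>v\<in>PiE {..<n} (\<lambda>_. Rset). f v * measure (joint n F) {\<omega>\<in>space (joint n F). attr \<omega> i = b \<and> (\<forall>j<n. score r \<omega> j = v j)})"
proof -
  let ?M = "joint n F"
  let ?S = "PiE {..<n} (\<lambda>_. Rset)"
  let ?s = "\<lambda>\<omega>. restrict (score r \<omega>) {..<n}"
  interpret M: prob_space ?M using joint_prob[OF Fp] .
  define E where "E v = {\<omega>\<in>space ?M. attr \<omega> i = b \<and> (\<forall>j<n. score r \<omega> j = v j)}" for v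
  have sE: "E v \<in> sets ?M" for v unfolding E_def using ev_sets[OF r_meas A_meas i_idx] .
  have sw: "?s \<omega> \<in> ?S" if "\<omega> \<in> space ?M" for \<omega>
    using that r_range unfolding joint_def space_PiM score_def by (auto simp: PiE_iff)
  have pt: "indicator {\<omega>\<in>space ?M. attr \<omega> i = b} \<omega> * f (?s \<omega>) = (\<Sum>v\<in>?S. f v * indicator (E v) \<omega>)"
    if w: "\<omega> \<in> space ?M" for \<omega>
  proof -
    have "(\<Sum>v\<in>?S. f v * indicator (E v) \<omega>) = (\<Sum>v\<in>?S. if v = ?s \<omega> then (if attr \<omega> i = b then f v else 0) else 0)"
    proof (rule sum.cong[OF refl])
      fix v assume v: "v \<in> ?S"
      have "(\<forall>j<n. score r \<omega> j = v j) \<longleftrightarrow> v = ?s \<omega>"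
        using v by (auto simp: fun_eq_iff PiE_iff extensional_def)
      then show "f v * indicator (E v) \<omega> = (if v = ?s \<omega> then (if attr \<omega> i = b then f v else 0) else 0)"
        using w unfolding E_def by (auto simp: indicator_def)
    qed
    also have "\<dots> = (if attr \<omega> i = b then f (?s \<omega>) else 0)"
      using sw[OF w] Rset_fin by (simp add: sum.delta finite_PiE)
    finally show ?thesis using w by (simp add: indicator_def)
  qed
  have "(\<integral>\<omega>. indicator {\<omega>\<in>space ?M. attr \<omega> i = b} \<omega> * f (?s \<omega>) \<partial>?M) = (\<integral>\<omega>. (\<Sum>v\<in>?S. f v * indicator (E v) \<omega>) \<partial>?M)"
    using pt by (intro Bochner_Integration.integral_cong) auto
  also have "\<dots> = (\<Sum>v\<in>?S. (\<integral>\<omega>. f v * indicator (E v) \<omega> \<partial>?M))"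
    by (rule Bochner_Integration.integral_sum) (use sE in \<open>auto intro!: integrable_mult_right simp: M.emeasure_finite less_top[symmetric]\<close>)
  also have "\<dots> = (\<Sum>v\<in>?S. f v * measure ?M (E v))"
    using sE by (simp add: Int_absorb2 sets.sets_into_space)
  finally show ?thesis unfolding E_def .
qed



lemma prod2:
  fixes n :: nat and x y :: real
  assumes "i < n" "j < n" "i \<noteq> j"
  shows "(\<Prod>k<n. if k = i then x else if k = j then y else 1) = x * y"
proof -
  have "(\<Prod>k<n. if k = i then x else if k = j then y else 1) =
     (if i = i then x else if i = j then y else 1) * (\<Prod>k\<in>{..<n}-{i}. if k = i then x else if k = j then y else 1)"
    using assms by (intro prod.remove) auto
  also have "(\<Prod>k\<in>{..<n}-{i}. if k = i then x else if k = j then y else 1) = (\<Prod>k\<in>{..<n}-{i}. if k = j then y else 1)"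
    by (rule prod.cong) auto
  also have "\<dots> = y" using assms by (simp add: prod.delta)
  finally show ?thesis by simp
qed

lemma indep:
  assumes Fp: "prob_space F"
    and r_meas: "(\<lambda>t. r (fst t)) \<in> borel_measurable F"
    and A_meas: "(\<lambda>t. fst (snd t)) \<in> measurable F (count_space UNIV)"
    and r_range: "\<forall>t \<in> space F. r (fst t) \<in> Rset"
    and Rset_unit: "Rset \<subseteq> {0..1}"
    and ij: "i < n" "j < n" "i \<noteq> j"
  shows "(\<integral>\<omega>. indicator {\<omega>\<in>space (joint n F). attr \<omega> i = b} \<omega> * score r \<omega> j \<partial>joint n F)
     = measure (joint n F) {\<omega>\<in>space (joint n F). attr \<omega> i = b} * (\<integral>\<omega>. score r \<omega> j \<partial>joint n F)"
proof -
  let ?M = "joint n F"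
  interpret F: prob_space F by (rule Fp)
  interpret P: product_prob_space "\<lambda>_. F" "{..<n}"
    using Fp by (simp add: product_prob_space_def product_sigma_finite_def product_prob_space_axioms_def
        prob_space_imp_sigma_finite)
  interpret M: prob_space ?M using joint_prob[OF Fp] .
  define fi where "fi t = (if fst (snd t) = b then 1 else 0 :: real)" for t :: "'a \<times> bool \<times> bool"
  define fr where "fr t = r (fst t)" for t :: "'a \<times> bool \<times> bool"
  have [measurable]: "(\<lambda>t. fst (snd t)) \<in> measurable F (count_space UNIV)" by (rule A_meas)
  have ifi: "integrable F fi"
    unfolding fi_def by (rule F.integrable_const_bound[where B=1]) auto
  have ifr: "integrable F fr"
    unfolding fr_def
    by (rule F.integrable_const_bound[where B=1]) (use r_range Rset_unit r_meas in \<open>auto intro!: AE_I2 simp: subset_iff\<close>)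
  have PI: "(\<integral>\<omega>. (\<Prod>k<n. g k (\<omega> k)) \<partial>?M) = (\<Prod>k<n. integral\<^sup>L F (g k))"
    if "\<And>k. integrable F (g k)" for g :: "nat \<Rightarrow> 'a \<times> bool \<times> bool \<Rightarrow> real"
    unfolding joint_def using P.product_integral_prod[of "{..<n}" g] that by simp
  have p1: "(\<Prod>k<n. (if k = i then fi else if k = j then fr else (\<lambda>_. 1)) (\<omega> k)) = fi (\<omega> i) * fr (\<omega> j)" for \<omega>
  proof -
    have "(\<Prod>k<n. (if k = i then fi else if k = j then fr else (\<lambda>_. 1)) (\<omega> k))
       = (\<Prod>k<n. if k = i then fi (\<omega> i) else if k = j then fr (\<omega> j) else 1)"
      by (rule prod.cong) auto
    then show ?thesis using prod2[OF ij] by simp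
  qed
  have p2: "(\<Prod>k<n. (if k = i then fi else (\<lambda>_. 1)) (\<omega> k)) = fi (\<omega> i)" for \<omega>
  proof -
    have "(\<Prod>k<n. (if k = i then fi else (\<lambda>_. 1)) (\<omega> k)) = (\<Prod>k<n. if k = i then fi (\<omega> i) else 1)"
      by (rule prod.cong) auto
    then show ?thesis using ij by (simp add: prod.delta)
  qed
  have p3: "(\<Prod>k<n. (if k = j then fr else (\<lambda>_. 1)) (\<omega> k)) = fr (\<omega> j)" for \<omega>
  proof -
    have "(\<Prod>k<n. (if k = j then fr else (\<lambda>_. 1)) (\<omega> k)) = (\<Prod>k<n. if k = j then fr (\<omega> j) else 1)"
      by (rule prod.cong) auto
    then show ?thesis using ij by (simp add: prod.delta)
  qed
  have e1: "(\<integral>\<omega>. indicator {\<omega>\<in>space ?M. attr \<omega> i = b} \<omega> * score r \<omega> j \<partial>?M) = 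
      (\<integral>\<omega>. (\<Prod>k<n. (if k = i then fi else if k = j then fr else (\<lambda>_. 1)) (\<omega> k)) \<partial>?M)"
    by (intro Bochner_Integration.integral_cong refl)
       (auto simp: p1 fi_def fr_def attr_def score_def indicator_def)
  have e2: "measure ?M {\<omega>\<in>space ?M. attr \<omega> i = b} = 
      (\<integral>\<omega>. (\<Prod>k<n. (if k = i then fi else (\<lambda>_. 1)) (\<omega> k)) \<partial>?M)"
  proof -
    have "measure ?M {\<omega>\<in>space ?M. attr \<omega> i = b} = (\<integral>\<omega>. indicator {\<omega>\<in>space ?M. attr \<omega> i = b} \<omega> \<partial>?M)"
      by (simp add: Int_absorb2)
    also have "\<dots> = (\<integral>\<omega>. (\<Prod>k<n. (if k = i then fi else (\<lambda>_. 1)) (\<omega> k)) \<partial>?M)"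
      by (intro Bochner_Integration.integral_cong refl)
         (auto simp: p2 fi_def attr_def indicator_def)
    finally show ?thesis .
  qed
  have e3: "(\<integral>\<omega>. score r \<omega> j \<partial>?M) = 
      (\<integral>\<omega>. (\<Prod>k<n. (if k = j then fr else (\<lambda>_. 1)) (\<omega> k)) \<partial>?M)"
    by (intro Bochner_Integration.integral_cong refl)
       (auto simp: p3 fr_def score_def)
  have "\<And>k. integrable F ((if k = i then fi else if k = j then fr else (\<lambda>_. 1)))"
    "\<And>k. integrable F ((if k = i then fi else (\<lambda>_. 1)))"
    "\<And>k. integrable F ((if k = j then fr else (\<lambda>_. 1)))"
    using ifi ifr by auto
  note I = PI[OF this(1)] PI[OF this(2)] PI[OF this(3)]
  have c1: "integral\<^sup>L F (\<lambda>_. 1::real) = 1" by (simp add: F.prob_space)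
  have q1: "(\<Prod>k<n. integral\<^sup>L F (if k = i then fi else if k = j then fr else (\<lambda>_. 1)))
      = (\<Prod>k<n. if k = i then integral\<^sup>L F fi else if k = j then integral\<^sup>L F fr else 1)"
    by (rule prod.cong) (auto simp: c1 F.prob_space)
  have q2: "(\<Prod>k<n. integral\<^sup>L F (if k = i then fi else (\<lambda>_. 1)))
      = (\<Prod>k<n. if k = i then integral\<^sup>L F fi else 1)"
    by (rule prod.cong) (auto simp: c1 F.prob_space)
  have q3: "(\<Prod>k<n. integral\<^sup>L F (if k = j then fr else (\<lambda>_. 1)))
      = (\<Prod>k<n. if k = j then integral\<^sup>L F fr else 1)"
    by (rule prod.cong) (auto simp: c1 F.prob_space)
  show ?thesis
    unfolding e1 e2 e3 I q1 q2 q3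
    by (simp add: prod2[OF ij] prod.delta ij)
qed



lemma exp_lin_top: "0 < c \<Longrightarrow> filterlim (\<lambda>x::real. exp (c * x)) at_top at_top"
  using filterlim_compose[OF exp_at_top filterlim_tendsto_pos_mult_at_top[OF tendsto_const _ filterlim_ident]] by simp

lemma exp_lin_bot: "c < 0 \<Longrightarrow> ((\<lambda>x::real. exp (c * x)) \<longlongrightarrow> 0) at_top"
  using filterlim_compose[OF exp_at_bot filterlim_tendsto_neg_mult_at_bot[OF tendsto_const _ filterlim_ident]] by simp

lemma G_rw:
  fixes v :: "nat \<Rightarrow> real"
  shows "exp (\<epsilon> * v i / 2) / (\<Sum>j<n. exp (\<epsilon> * v j / 2)) = 1 / (\<Sum>j<n. exp (((v j - v i) / 2) * \<epsilon>))"
proof -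
  have "(\<Sum>j<n. exp (\<epsilon> * v j / 2)) = exp (\<epsilon> * v i / 2) * (\<Sum>j<n. exp (((v j - v i) / 2) * \<epsilon>))"
    unfolding sum_distrib_left
    by (rule sum.cong) (auto simp: exp_add[symmetric] algebra_simps diff_divide_distrib)
  then show ?thesis by simp
qed

lemma G_lim:
  fixes v :: "nat \<Rightarrow> real"
  assumes i: "i < n"
  shows "((\<lambda>\<epsilon>. exp (\<epsilon> * v i / 2) / (\<Sum>j<n. exp (\<epsilon> * v j / 2))) \<longlongrightarrow>
     (let m = Max (v ` {..<n}) in if v i \<noteq> m then 0 else 1 / real (card {j\<in>{..<n}. v j = m}))) at_top"
proof -
  define m where "m = Max (v ` {..<n})"
  have fin: "finite (v ` {..<n})" and ne: "v ` {..<n} \<noteq> {}" using i by auto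
  have le: "v j \<le> m" if "j < n" for j unfolding m_def using fin that by (intro Max_ge) auto
  obtain k where k: "k < n" "v k = m" using Max_in[OF fin ne] unfolding m_def by auto
  show ?thesis
  proof (cases "v i = m")
    case False
    then have lt: "v i < m" using le[OF i] by simp
    have "filterlim (\<lambda>\<epsilon>. exp (((v k - v i) / 2) * \<epsilon>)) at_top at_top"
      using lt k by (intro exp_lin_top) simp
    moreover have "\<forall>\<^sub>F \<epsilon> in at_top. exp (((v k - v i) / 2) * \<epsilon>) \<le> (\<Sum>j<n. exp (((v j - v i) / 2) * \<epsilon>))"
    proof (intro always_eventually allI)
      fix \<epsilon> :: real
      show "exp (((v k - v i) / 2) * \<epsilon>) \<le> (\<Sum>j<n. exp (((v j - v i) / 2) * \<epsilon>))"
        using k by (intro member_le_sum) auto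
    qed
    ultimately have "filterlim (\<lambda>\<epsilon>. (\<Sum>j<n. exp (((v j - v i) / 2) * \<epsilon>))) at_top at_top"
      by (rule filterlim_at_top_mono)
    then have "((\<lambda>\<epsilon>. inverse (\<Sum>j<n. exp (((v j - v i) / 2) * \<epsilon>))) \<longlongrightarrow> 0) at_top"
      by (rule tendsto_inverse_0_at_top)
    moreover have "(\<lambda>\<epsilon>. exp (\<epsilon> * v i / 2) / (\<Sum>j<n. exp (\<epsilon> * v j / 2))) = (\<lambda>\<epsilon>. inverse (\<Sum>j<n. exp (((v j - v i) / 2) * \<epsilon>)))"
      by (rule ext) (simp only: G_rw inverse_eq_divide)
    moreover have "(let m = Max (v ` {..<n}) in if v i \<noteq> m then 0 else 1 / real (card {j\<in>{..<n}. v j = m})) = 0"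
      using False unfolding m_def[symmetric] Let_def by simp
    ultimately show ?thesis by simp
  next
    case True
    have "((\<lambda>\<epsilon>. exp (((v j - v i) / 2) * \<epsilon>)) \<longlongrightarrow> (if v j = m then 1 else 0)) at_top" if j: "j \<in> {..<n}" for j
    proof (cases "v j = m")
      case True then show ?thesis using \<open>v i = m\<close> by simp
    next
      case False
      then have "v j < m" using le j by force
      then have "(v j - v i) / 2 < 0" using \<open>v i = m\<close> by simp
      from exp_lin_bot[OF this] show ?thesis using False by simp
    qed
    then have "((\<lambda>\<epsilon>. \<Sum>j<n. exp (((v j - v i) / 2) * \<epsilon>)) \<longlongrightarrow> (\<Sum>j<n. if v j = m then 1 else 0)) at_top"
      by (rule tendsto_sum)
    moreover have "(\<Sum>j<n. if v j = m then 1 else (0::real)) = real (card {j\<in>{..<n}. v j = m})"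
      by (simp only: real_of_card sum.inter_filter[OF finite_lessThan])
    moreover have "card {j\<in>{..<n}. v j = m} \<noteq> 0" using i True by (auto simp: card_eq_0_iff)
    ultimately have "((\<lambda>\<epsilon>. 1 / (\<Sum>j<n. exp (((v j - v i) / 2) * \<epsilon>))) \<longlongrightarrow> 1 / real (card {j\<in>{..<n}. v j = m})) at_top"
      by (intro tendsto_divide tendsto_const) auto
    moreover have "(\<lambda>\<epsilon>. exp (\<epsilon> * v i / 2) / (\<Sum>j<n. exp (\<epsilon> * v j / 2))) = (\<lambda>\<epsilon>. 1 / (\<Sum>j<n. exp (((v j - v i) / 2) * \<epsilon>)))"
      by (rule ext) (simp only: G_rw)
    moreover have "(let m = Max (v ` {..<n}) in if v i \<noteq> m then 0 else 1 / real (card {j\<in>{..<n}. v j = m})) = 1 / real (card {j\<in>{..<n}. v j = m})"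
      using True unfolding m_def[symmetric] Let_def by simp
    ultimately show ?thesis by simp
  qed
qed

lemma sum_exp_pos: "0 < (n::nat) \<Longrightarrow> 0 < (\<Sum>j<n. exp (f j :: real))"
  by (intro sum_pos) auto

lemma G_deriv:
  fixes v :: "nat \<Rightarrow> real"
  assumes i: "i < n"
  shows "((\<lambda>\<epsilon>. exp (\<epsilon> * v i / 2) / (\<Sum>j<n. exp (\<epsilon> * v j / 2))) has_real_derivative
     ((real n * v i - (\<Sum>j<n. v j)) / (2 * real n ^ 2))) (at 0)"
proof -
  have d1: "((\<lambda>\<epsilon>. exp (\<epsilon> * v i / 2)) has_real_derivative v i / 2) (at 0)"
    by (auto intro!: derivative_eq_intros)
  have d2: "((\<lambda>\<epsilon>. \<Sum>j<n. exp (\<epsilon> * v j / 2)) has_real_derivative (\<Sum>j<n. v j / 2)) (at 0)"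
    by (rule DERIV_sum) (auto intro!: derivative_eq_intros)
  have n0: "(\<Sum>j<n. exp (0 * v j / 2)) = real n" by simp
  have "0 < n" using i by simp
  have "((\<lambda>\<epsilon>. exp (\<epsilon> * v i / 2) / (\<Sum>j<n. exp (\<epsilon> * v j / 2))) has_real_derivative
     ((v i / 2) * (\<Sum>j<n. exp (0 * v j / 2)) - exp (0 * v i / 2) * (\<Sum>j<n. v j / 2)) /
      ((\<Sum>j<n. exp (0 * v j / 2)) * (\<Sum>j<n. exp (0 * v j / 2)))) (at 0)"
    by (rule DERIV_divide[OF d1 d2]) (use \<open>0 < n\<close> in simp)
  moreover have "((v i / 2) * (\<Sum>j<n. exp (0 * v j / 2)) - exp (0 * v i / 2) * (\<Sum>j<n. v j / 2)) /
      ((\<Sum>j<n. exp (0 * v j / 2)) * (\<Sum>j<n. exp (0 * v j / 2))) = (real n * v i - (\<Sum>j<n. v j)) / (2 * real n ^ 2)"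
    unfolding n0 by (simp add: sum_divide_distrib[symmetric] power2_eq_square field_simps)
  ultimately show ?thesis by simp
qed

lemma G_cont:
  fixes v :: "nat \<Rightarrow> real"
  assumes "0 < n"
  shows "continuous_on T (\<lambda>\<epsilon>. exp (\<epsilon> * v i / 2) / (\<Sum>j<n. exp (\<epsilon> * v j / 2)))"
  using sum_exp_pos[OF assms] by (intro continuous_intros) (auto simp: less_le)


lemma gen_alg: "(t::real) * ((n * x - (x + S)) / c) = (n * (t * x) - t * x - t * S) / c"
  by (simp add: algebra_simps)

theorem theorem7:
  fixes F :: "('x \<times> bool \<times> bool) measure"
    and r :: "'x \<Rightarrow> real"
    and Rset :: "real set"
    and n i :: nat
    and a :: bool
  assumes F_prob: "prob_space F"
    and r_meas: "(\<lambda>t. r (fst t)) \<in> borel_measurable F"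
    and A_meas: "(\<lambda>t. fst (snd t)) \<in> measurable F (count_space UNIV)"
    and Rset_fin: "finite Rset"
    and Rset_unit: "Rset \<subseteq> {0..1}"
    and r_range: "\<forall>t \<in> space F. r (fst t) \<in> Rset"
    and A0_pos: "measure F {t \<in> space F. fst (snd t) = False} > 0"
    and A1_pos: "measure F {t \<in> space F. fst (snd t) = True} > 0"
    and i_idx: "i < n"
    and cond1: "cond_exp_ev (joint n F) (\<lambda>\<omega>. attr \<omega> i = a) (\<lambda>\<omega>. Zmax r n \<omega> i)
              < cond_exp_ev (joint n F) (\<lambda>\<omega>. attr \<omega> i = (\<not> a)) (\<lambda>\<omega>. Zmax r n \<omega> i)"
    and cond2: "cond_exp_ev (joint n F) (\<lambda>\<omega>. attr \<omega> i = a) (\<lambda>\<omega>. score r \<omega> i)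
              > cond_exp_ev (joint n F) (\<lambda>\<omega>. attr \<omega> i = (\<not> a)) (\<lambda>\<omega>. score r \<omega> i)"
  shows "\<exists>\<epsilon>o > 0. dp_gap r F n i \<epsilon>o = 0"
proof -
  let ?M = "joint n F"
  let ?S = "PiE {..<n} (\<lambda>_. Rset)"
  interpret F: prob_space F by (rule F_prob)
  interpret M: prob_space ?M using joint_prob[OF F_prob] .
  define s where "s \<omega> = restrict (score r \<omega>) {..<n}" for \<omega>
  define A where "A b = {\<omega>\<in>space ?M. attr \<omega> i = b}" for b
  define p where "p b = measure ?M (A b)" for b
  define q where "q b v = measure ?M {\<omega>\<in>space ?M. attr \<omega> i = b \<and> (\<forall>j<n. score r \<omega> j = v j)}" for b v
  define E where "E b h = (\<Sum>v\<in>?S. h v * q b v) / p b" for b h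
  define G where "G \<epsilon> v = exp (\<epsilon> * v i / 2) / (\<Sum>j<n. exp (\<epsilon> * v j / 2))" for \<epsilon> and v :: "nat \<Rightarrow> real"
  define Gm where "Gm v = (let m = Max (v ` {..<n}) in if v i \<noteq> m then 0 else 1 / real (card {j\<in>{..<n}. v j = m}))" for v :: "nat \<Rightarrow> real"
  define G' where "G' v = (real n * v i - (\<Sum>j<n. v j)) / (2 * real n ^ 2)" for v :: "nat \<Rightarrow> real"
  have n0: "0 < n" using i_idx by simp
  have cexp: "cond_exp_ev ?M (\<lambda>\<omega>. attr \<omega> i = b) (\<lambda>\<omega>. h (s \<omega>)) = E b h" for b h
    unfolding cond_exp_ev_def E_def q_def p_def s_def A_def
    using red[OF F_prob r_meas A_meas r_range i_idx Rset_fin, of b h] by simp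
  have Zeps_eq: "Zeps r n \<epsilon> \<omega> i = G \<epsilon> (s \<omega>)" for \<epsilon> \<omega>
    unfolding Zeps_def G_def s_def using i_idx by simp
  have img: "s \<omega> ` {..<n} = score r \<omega> ` {..<n}" for \<omega>
    unfolding s_def by auto
  have Zmax_eq: "Zmax r n \<omega> i = Gm (s \<omega>)" for \<omega>
  proof -
    have "{j\<in>{..<n}. s \<omega> j = x} = {j\<in>{..<n}. score r \<omega> j = x}" for x
      unfolding s_def by auto
    then show ?thesis unfolding Zmax_def Gm_def img using i_idx by (simp add: s_def)
  qed
  have score_eq: "score r \<omega> i = s \<omega> i" for \<omega> unfolding s_def using i_idx by simp
  have c1: "E a Gm < E (\<not> a) Gm"
    using cond1 unfolding Zmax_eq cexp .
  have c2: "E a (\<lambda>v. v i) > E (\<not> a) (\<lambda>v. v i)"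
    using cond2 unfolding score_eq cexp[of _ "\<lambda>v. v i", simplified] .
  have Enn: "0 \<le> E b h" if "\<And>v. v \<in> ?S \<Longrightarrow> 0 \<le> h v" for b h
    unfolding E_def p_def q_def using that by (intro divide_nonneg_nonneg sum_nonneg mult_nonneg_nonneg) auto
  have Sunit: "0 \<le> v i" if "v \<in> ?S" for v using that i_idx Rset_unit by (auto simp: PiE_iff subset_iff)
  have Gm_nn: "0 \<le> Gm v" for v unfolding Gm_def by (simp add: Let_def)
  have pa: "p a > 0"
  proof (rule ccontr)
    assume "\<not> p a > 0"
    then have "p a = 0" using measure_nonneg[of ?M "A a"] unfolding p_def by linarith
    then have "E a (\<lambda>v. v i) = 0" unfolding E_def by simp
    moreover have "0 \<le> E (\<not> a) (\<lambda>v. v i)" by (rule Enn) (rule Sunit)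
    ultimately show False using c2 by simp
  qed
  have pna: "p (\<not> a) > 0"
  proof (rule ccontr)
    assume "\<not> p (\<not> a) > 0"
    then have "p (\<not> a) = 0" using measure_nonneg[of ?M "A (\<not> a)"] unfolding p_def by linarith
    then have "E (\<not> a) Gm = 0" unfolding E_def by simp
    moreover have "0 \<le> E a Gm" by (rule Enn) (rule Gm_nn)
    ultimately show False using c1 by simp
  qed
  have sumq: "(\<Sum>v\<in>?S. q b v) = p b" for b
  proof -
    have "(\<Sum>v\<in>?S. q b v) = (\<integral>\<omega>. indicator (A b) \<omega> * (\<lambda>_. 1::real) (s \<omega>) \<partial>?M)"
      unfolding q_def A_def s_def using red[OF F_prob r_meas A_meas r_range i_idx Rset_fin, of b "\<lambda>_. 1"] by simp
    also have "\<dots> = p b" unfolding p_def A_def by (simp add: Int_absorb2)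
    finally show ?thesis .
  qed
  have Econst: "E b (\<lambda>_. c) = c" if "p b > 0" for b c
    unfolding E_def using that by (simp add: sum_distrib_left[symmetric] sumq)
  have n2: "n \<ge> 2"
  proof (rule ccontr)
    assume "\<not> n \<ge> 2"
    then have "n = 1" "i = 0" using i_idx by auto
    moreover have "{j. j = (0::nat) \<and> x j = x 0} = {0}" for x :: "nat \<Rightarrow> real" by auto
    ultimately have "Gm = (\<lambda>_. 1)" unfolding Gm_def by (auto simp: Let_def fun_eq_iff lessThan_Suc)
    then show False using c1 Econst[OF pa] Econst[OF pna] by simp
  qed
  define g where "g \<epsilon> = E a (G \<epsilon>) - E (\<not> a) (G \<epsilon>)" for \<epsilon>
  have g0: "g 0 = 0"
  proof -
    have "G 0 = (\<lambda>_. 1 / real n)" unfolding G_def by (simp add: fun_eq_iff)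
    then show ?thesis unfolding g_def using Econst[OF pa] Econst[OF pna] by simp
  qed
  have Ederiv: "((\<lambda>\<epsilon>. E b (G \<epsilon>)) has_real_derivative E b G') (at 0)" for b
    unfolding E_def
    by (intro DERIV_cdivide DERIV_sum DERIV_cmult_right) (unfold G_def G'_def, rule G_deriv[OF i_idx])
  have gderiv: "(g has_real_derivative (E a G' - E (\<not> a) G')) (at 0)"
    unfolding g_def[abs_def] by (intro DERIV_diff Ederiv)
  have [measurable]: "(\<lambda>\<omega>. attr \<omega> i) \<in> measurable ?M (count_space UNIV)"
    using attr_meas[OF A_meas i_idx] .
  have [measurable]: "\<And>j. j < n \<Longrightarrow> (\<lambda>\<omega>. score r \<omega> j) \<in> borel_measurable ?M"
    using score_meas[OF r_meas] by blast
  have Asets: "A b \<in> sets ?M" for b unfolding A_def by measurable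
  have sc_range: "0 \<le> score r \<omega> j \<and> score r \<omega> j \<le> 1" if "\<omega> \<in> space ?M" "j < n" for \<omega> j
  proof -
    have "\<omega> j \<in> space F" using that unfolding joint_def space_PiM by auto
    then have "score r \<omega> j \<in> Rset" using r_range unfolding score_def by auto
    then show ?thesis using Rset_unit by auto
  qed
  have intg: "integrable ?M (\<lambda>\<omega>. indicator (A b) \<omega> * score r \<omega> j)" if "j < n" for b j
  proof (rule M.integrable_const_bound[where B=1])
    show "AE \<omega> in ?M. norm (indicator (A b) \<omega> * score r \<omega> j) \<le> 1"
      using sc_range[OF _ that] by (intro AE_I2) (auto simp: indicator_def)
    show "(\<lambda>\<omega>. indicator (A b) \<omega> * score r \<omega> j) \<in> borel_measurable ?M"
      using that Asets by measurable
  qed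
  define I where "I b = (\<integral>\<omega>. indicator (A b) \<omega> * score r \<omega> i \<partial>?M)" for b
  define K where "K = (\<Sum>j\<in>{..<n}-{i}. \<integral>\<omega>. score r \<omega> j \<partial>?M)"
  have Ii: "I b / p b = E b (\<lambda>v. v i)" for b
    using cexp[of b "\<lambda>v. v i", simplified] unfolding cond_exp_ev_def I_def A_def p_def score_eq .
  have EG': "E b G' = ((real n - 1) * (I b / p b) - K) / (2 * real n ^ 2)" if pb: "p b > 0" for b
  proof -
    have "E b G' = cond_exp_ev ?M (\<lambda>\<omega>. attr \<omega> i = b) (\<lambda>\<omega>. G' (s \<omega>))" by (rule cexp[symmetric])
    also have "\<dots> = (\<integral>\<omega>. indicator (A b) \<omega> * G' (s \<omega>) \<partial>?M) / p b"
      unfolding cond_exp_ev_def A_def p_def ..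
    also have "(\<integral>\<omega>. indicator (A b) \<omega> * G' (s \<omega>) \<partial>?M) =
       (\<integral>\<omega>. (real n * (indicator (A b) \<omega> * score r \<omega> i) - indicator (A b) \<omega> * score r \<omega> i
          - (\<Sum>j\<in>{..<n}-{i}. indicator (A b) \<omega> * score r \<omega> j)) / (2 * real n ^ 2) \<partial>?M)"
    proof (intro Bochner_Integration.integral_cong refl)
      fix \<omega>
      have "(\<Sum>j<n. s \<omega> j) = (\<Sum>j<n. score r \<omega> j)" by (rule sum.cong) (auto simp: s_def)
      also have "\<dots> = score r \<omega> i + (\<Sum>j\<in>{..<n}-{i}. score r \<omega> j)"
        using i_idx by (subst sum.remove[of "{..<n}" i]) auto
      finally have "(\<Sum>j<n. s \<omega> j) = score r \<omega> i + (\<Sum>j\<in>{..<n}-{i}. score r \<omega> j)" .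
      then show "indicator (A b) \<omega> * G' (s \<omega>) =
        (real n * (indicator (A b) \<omega> * score r \<omega> i) - indicator (A b) \<omega> * score r \<omega> i
          - (\<Sum>j\<in>{..<n}-{i}. indicator (A b) \<omega> * score r \<omega> j)) / (2 * real n ^ 2)"
        unfolding G'_def score_eq[symmetric] sum_distrib_left[symmetric]
        by (simp only: gen_alg)
    qed
    also have "\<dots> = (real n * I b - I b - (\<Sum>j\<in>{..<n}-{i}. \<integral>\<omega>. indicator (A b) \<omega> * score r \<omega> j \<partial>?M)) / (2 * real n ^ 2)"
    proof -
      let ?X = "\<lambda>\<omega>. indicator (A b) \<omega> * score r \<omega> i"
      let ?Z = "\<lambda>\<omega>. (\<Sum>j\<in>{..<n}-{i}. indicator (A b) \<omega> * score r \<omega> j)"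
      have iX: "integrable ?M ?X" using intg i_idx by blast
      have iZ: "integrable ?M ?Z" using intg by (intro Bochner_Integration.integrable_sum) auto
      have iXn: "integrable ?M (\<lambda>\<omega>. real n * ?X \<omega>)" using iX by (rule integrable_mult_right)
      have "(\<integral>\<omega>. (real n * ?X \<omega> - ?X \<omega> - ?Z \<omega>) / (2 * real n ^ 2) \<partial>?M)
          = (\<integral>\<omega>. (real n * ?X \<omega> - ?X \<omega> - ?Z \<omega>) \<partial>?M) / (2 * real n ^ 2)"
        by (rule integral_divide_zero)
      also have "(\<integral>\<omega>. (real n * ?X \<omega> - ?X \<omega> - ?Z \<omega>) \<partial>?M) = (\<integral>\<omega>. (real n * ?X \<omega> - ?X \<omega>) \<partial>?M) - (\<integral>\<omega>. ?Z \<omega> \<partial>?M)"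
        by (rule Bochner_Integration.integral_diff) (use iX iZ iXn in auto)
      also have "(\<integral>\<omega>. (real n * ?X \<omega> - ?X \<omega>) \<partial>?M) = (\<integral>\<omega>. real n * ?X \<omega> \<partial>?M) - (\<integral>\<omega>. ?X \<omega> \<partial>?M)"
        by (rule Bochner_Integration.integral_diff) (use iX iXn in auto)
      also have "(\<integral>\<omega>. real n * ?X \<omega> \<partial>?M) = real n * (\<integral>\<omega>. ?X \<omega> \<partial>?M)"
        by (rule integral_mult_right_zero)
      also have "(\<integral>\<omega>. ?Z \<omega> \<partial>?M) = (\<Sum>j\<in>{..<n}-{i}. \<integral>\<omega>. indicator (A b) \<omega> * score r \<omega> j \<partial>?M)"
        by (rule Bochner_Integration.integral_sum) (use intg in auto)
      finally show ?thesis unfolding I_def .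
    qed
    also have "(\<Sum>j\<in>{..<n}-{i}. \<integral>\<omega>. indicator (A b) \<omega> * score r \<omega> j \<partial>?M) = p b * K"
      unfolding K_def sum_distrib_left p_def A_def
      by (rule sum.cong[OF refl]) (rule indep[OF F_prob r_meas A_meas r_range Rset_unit i_idx]; auto)
    finally show ?thesis using pb by (simp add: field_simps)
  qed
  have Dpos: "E a G' - E (\<not> a) G' > 0"
  proof -
    have "E a G' - E (\<not> a) G' = (real n - 1) / (2 * real n ^ 2) * (E a (\<lambda>v. v i) - E (\<not> a) (\<lambda>v. v i))"
      unfolding EG'[OF pa] EG'[OF pna] Ii using n0 by (simp add: field_simps)
    moreover have "(real n - 1) / (2 * real n ^ 2) > 0" using n2 by simp
    moreover have "E a (\<lambda>v. v i) - E (\<not> a) (\<lambda>v. v i) > 0" using c2 by simp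
    ultimately show ?thesis by (metis mult_pos_pos)
  qed
  have Glim: "((\<lambda>\<epsilon>. G \<epsilon> v) \<longlongrightarrow> Gm v) at_top" for v
    unfolding G_def Gm_def by (rule G_lim[OF i_idx])
  have glim: "(g \<longlongrightarrow> (E a Gm - E (\<not> a) Gm)) at_top"
    unfolding g_def[abs_def] E_def
    by (intro tendsto_diff tendsto_divide tendsto_sum tendsto_mult Glim tendsto_const) (use pa pna in auto)
  have Gc: "continuous_on T (\<lambda>\<epsilon>. G \<epsilon> v)" for T v
    unfolding G_def by (rule G_cont[OF n0])
  have gc: "continuous_on T g" for T
    unfolding g_def[abs_def] E_def
    by (intro continuous_on_diff continuous_on_divide continuous_on_sum continuous_on_mult Gc continuous_on_const) (use pa pna in auto)
  obtain d where d: "d > 0" "\<And>h. h > 0 \<Longrightarrow> h < d \<Longrightarrow> g 0 < g (0 + h)"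
    using DERIV_pos_inc_right[OF gderiv Dpos] by blast
  have gpos: "g (d / 2) > 0" using d(2)[of "d/2"] d(1) g0 by simp
  have "\<forall>\<^sub>F \<epsilon> in at_top. g \<epsilon> < 0" using order_tendstoD(2)[OF glim] c1 by simp
  then obtain N where N: "\<And>\<epsilon>. \<epsilon> \<ge> N \<Longrightarrow> g \<epsilon> < 0" unfolding eventually_at_top_linorder by blast
  have gneg: "g (max N d) < 0" by (rule N) simp
  obtain x where x: "d / 2 \<le> x" "x \<le> max N d" "g x = 0"
    using IVT2'[of g "max N d" 0 "d / 2", OF _ _ _ gc] gpos gneg d(1) by force
  have dp: "dp_gap r F n i x = E False (G x) - E True (G x)"
    unfolding dp_gap_def Zeps_eq cexp[of False] cexp[of True] ..
  have "dp_gap r F n i x = 0"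
    using x(3) unfolding dp g_def by (cases a) auto
  moreover have "x > 0" using x(1) d(1) by simp
  ultimately show ?thesis by blast
qed

end
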